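(* There exists a constant $c>0$ (independent of $n$ and $m$) such that for every $n\ge3$, every $3\le m\le n$, $$\sup_{m-1\le n'\le n-1}\ \sup_{\mathbf{s}\in\mathcal{S}^n_0(m,n')}\tilde{\mathbb{E}}_{\mathbf{s}}\,\xi^{n'}(m)\le cm^2,$$ where $\xi^{n'}(m)=\inf\{t\ge0:X_{n'+1}(t)>0\}\wedge\inf\{t\ge0:X_{n'}(t)\ge(2e)^{-1}\}$.
   Context: The $n$-particle Stochastic Follow-the-Leader system $\mathbf{X}=(X_1,\dots,X_n)$ on $\mathbb{R}$, $X_n\le\dots\le X_1$, evolves as a pure jump Markov process: the leader $X_1$ jumps forward at rate $1$ with i.i.d. jump sizes of a law $\theta$ on $(0,\infty)$; for $i\ge2$, $X_i$ jumps at rate $X_{i-1}-X_i$ to a uniform location in $(X_i,X_{i-1})$. $\tilde{\mathbb{E}}_{\mathbf{s}}$ denotes expectation when $\mathbf{X}(0)=\mathbf{s}$. For $3\le m\le n$ and $m-1\le n'\le n-1$, $\mathcal{S}^n_0(m,n')=\{(x_1,\dots,x_n)\in\mathbb{R}^n:x_1\ge x_2\ge\dots\ge x_n,\ x_{n'+1}=0,\ x_{n'-m+2}\ge1\}$. *)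

theory Defs
  imports "HOL-Probability.Probability"
begin

text \<open>Stochastic Follow-the-Leader system with n particles, indexed 1..n
  (configurations are functions nat => real; only indices 1..n matter).
  The pure jump process is constructed canonically from an i.i.d. input
  sequence: at each step k we draw (u,v) uniform on [0,1]^2, an Exp(1)
  variable e and a leader jump size j with law theta.  The embedded jump
  chain chooses the jumping particle with probability proportional to its
  rate (u selects it), the holding time is e / (total rate), and the
  continuous-time path is piecewise constant and right-continuous.\<close>

definition sftl_rate :: "nat \<Rightarrow> (nat \<Rightarrow> real) \<Rightarrow> real" where
  "sftl_rate n x = 1 + (\<Sum>i\<in>{2..n}. x (i - 1) - x i)"

definition sftl_cum :: "nat \<Rightarrow> (nat \<Rightarrow> real) \<Rightarrow> nat \<Rightarrow> real" where
  "sftl_cum n x i = 1 + (\<Sum>j\<in>{2..i}. x (j - 1) - x j)"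

definition sftl_step :: "nat \<Rightarrow> (nat \<Rightarrow> real) \<Rightarrow> real \<Rightarrow> real \<Rightarrow> real \<Rightarrow> (nat \<Rightarrow> real)" where
  "sftl_step n x u v j =
    (let r = u * sftl_rate n x in
     if r < 1 then x(1 := x 1 + j)
     else if (\<exists>i\<in>{2..n}. r < sftl_cum n x i) then
       (let i = (LEAST i. 2 \<le> i \<and> i \<le> n \<and> r < sftl_cum n x i)
        in x(i := x i + v * (x (i - 1) - x i)))
     else x)"

type_synonym sftl_input = "(real \<times> real) \<times> (real \<times> real)"

definition sftl_input_measure :: "real measure \<Rightarrow> sftl_input measure" where
  "sftl_input_measure \<theta> =
     (uniform_measure lborel {0..1} \<Otimes>\<^sub>M uniform_measure lborel {0..1}) \<Otimes>\<^sub>M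
     (density lborel (exponential_density 1) \<Otimes>\<^sub>M \<theta>)"

definition sftl_space :: "real measure \<Rightarrow> (nat \<Rightarrow> sftl_input) measure" where
  "sftl_space \<theta> = PiM UNIV (\<lambda>_::nat. sftl_input_measure \<theta>)"

primrec sftl_chain :: "nat \<Rightarrow> (nat \<Rightarrow> real) \<Rightarrow> (nat \<Rightarrow> sftl_input) \<Rightarrow> nat \<Rightarrow> (nat \<Rightarrow> real)" where
  "sftl_chain n s \<omega> 0 = s"
| "sftl_chain n s \<omega> (Suc k) =
     sftl_step n (sftl_chain n s \<omega> k) (fst (fst (\<omega> k))) (snd (fst (\<omega> k))) (snd (snd (\<omega> k)))"

definition sftl_hold :: "nat \<Rightarrow> (nat \<Rightarrow> real) \<Rightarrow> (nat \<Rightarrow> sftl_input) \<Rightarrow> nat \<Rightarrow> real" where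
  "sftl_hold n s \<omega> k = fst (snd (\<omega> k)) / sftl_rate n (sftl_chain n s \<omega> k)"

definition sftl_jt :: "nat \<Rightarrow> (nat \<Rightarrow> real) \<Rightarrow> (nat \<Rightarrow> sftl_input) \<Rightarrow> nat \<Rightarrow> real" where
  "sftl_jt n s \<omega> k = (\<Sum>j<k. sftl_hold n s \<omega> j)"

text \<open>The continuous-time process X(t); None if t lies beyond all jump times
  (explosion, which has probability zero).\<close>
definition sftl_X :: "nat \<Rightarrow> (nat \<Rightarrow> real) \<Rightarrow> (nat \<Rightarrow> sftl_input) \<Rightarrow> real \<Rightarrow> (nat \<Rightarrow> real) option" where
  "sftl_X n s \<omega> t =
    (if \<exists>k. sftl_jt n s \<omega> k \<le> t \<and> t < sftl_jt n s \<omega> (Suc k)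
     then Some (sftl_chain n s \<omega> (LEAST k. sftl_jt n s \<omega> k \<le> t \<and> t < sftl_jt n s \<omega> (Suc k)))
     else None)"

text \<open>The stopping time xi^{n'}(m) (inf of the empty set is infinity).\<close>
definition sftl_xi :: "nat \<Rightarrow> nat \<Rightarrow> (nat \<Rightarrow> real) \<Rightarrow> (nat \<Rightarrow> sftl_input) \<Rightarrow> ennreal" where
  "sftl_xi n n' s \<omega> =
     min (INF t \<in> {t. 0 \<le> t \<and> (\<exists>x. sftl_X n s \<omega> t = Some x \<and> x (n' + 1) > 0)}. ennreal t)
         (INF t \<in> {t. 0 \<le> t \<and> (\<exists>x. sftl_X n s \<omega> t = Some x \<and> x n' \<ge> 1 / (2 * exp 1))}. ennreal t)"

definition sftl_E :: "real measure \<Rightarrow> nat \<Rightarrow> (nat \<Rightarrow> real) \<Rightarrow> ((nat \<Rightarrow> sftl_input) \<Rightarrow> ennreal) \<Rightarrow> ennreal" where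
  "sftl_E \<theta> n s f = (\<integral>\<^sup>+ \<omega>. f \<omega> \<partial>sftl_space \<theta>)"

text \<open>The set S^n_0(m,n') (vectors in R^n, represented with zero outside 1..n).\<close>
definition sftl_S :: "nat \<Rightarrow> nat \<Rightarrow> nat \<Rightarrow> (nat \<Rightarrow> real) set" where
  "sftl_S n m n' = {x. (\<forall>i. i \<notin> {1..n} \<longrightarrow> x i = 0) \<and>
       (\<forall>i\<in>{1..<n}. x (i + 1) \<le> x i) \<and> x (n' + 1) = 0 \<and> x (n' + 2 - m) \<ge> 1}"

end

theory Submission
  imports Defs
begin

definition XS :: "(nat \<Rightarrow> real) measure" where "XS = PiM UNIV (\<lambda>_. borel)"
definition IB :: "sftl_input measure" where
  "IB = (borel \<Otimes>\<^sub>M borel) \<Otimes>\<^sub>M (borel \<Otimes>\<^sub>M borel)"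
definition stp :: "nat \<Rightarrow> (nat \<Rightarrow> real) \<Rightarrow> sftl_input \<Rightarrow> (nat \<Rightarrow> real)" where
  "stp n x a = sftl_step n x (fst (fst a)) (snd (fst a)) (snd (snd a))"

lemma space_XS[simp]: "space XS = UNIV"
  by (simp add: XS_def space_PiM)

lemma chain0: "sftl_chain n x \<omega> 0 = x" by simp

lemma chain_Suc_shift:
  "sftl_chain n x \<omega> (Suc k) = sftl_chain n (stp n x (\<omega> 0)) (\<lambda>i. \<omega> (Suc i)) k"
  by (induction k) (simp_all add: stp_def)

lemma stp_coord: "stp n x a k =
  (let u = fst (fst a); v = snd (fst a); j = snd (snd a); r = u * sftl_rate n x in
   if r < 1 then (if k = 1 then x 1 + j else x k)
   else if (\<exists>i\<in>{2..n}. r < sftl_cum n x i) then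
     (if k = (LEAST i. 2 \<le> i \<and> i \<le> n \<and> r < sftl_cum n x i) then x k + v * (x (k - 1) - x k) else x k)
   else x k)"
  unfolding stp_def sftl_step_def Let_def by auto

lemma meas_XS_comp:
  assumes "f \<in> measurable M XS"
  shows "(\<lambda>w. f w i) \<in> borel_measurable M"
  using measurable_compose[OF assms[unfolded XS_def] measurable_component_singleton[of i UNIV]]
  by simp

lemma meas_rate[measurable]:
  assumes [measurable]: "f \<in> measurable M XS"
  shows "(\<lambda>w. sftl_rate n (f w)) \<in> borel_measurable M"
proof -
  have [measurable]: "(\<lambda>w. f w i) \<in> borel_measurable M" for i
    by (rule meas_XS_comp) simp
  show ?thesis unfolding sftl_rate_def by measurable
qed

lemma meas_cum[measurable]:
  assumes [measurable]: "f \<in> measurable M XS"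
  shows "(\<lambda>w. sftl_cum n (f w) i) \<in> borel_measurable M"
proof -
  have [measurable]: "(\<lambda>w. f w i) \<in> borel_measurable M" for i
    by (rule meas_XS_comp) simp
  show ?thesis unfolding sftl_cum_def by measurable
qed

lemma meas_stp: "(\<lambda>p. stp n (fst p) (snd p)) \<in> measurable (XS \<Otimes>\<^sub>M IB) XS"
proof -
  have F[measurable]: "fst \<in> measurable (XS \<Otimes>\<^sub>M IB) XS" by simp
  have [measurable]: "(\<lambda>p. fst p i) \<in> borel_measurable (XS \<Otimes>\<^sub>M IB)" for i
    by (rule meas_XS_comp[OF F])
  have [measurable]: "(\<lambda>p. fst (fst (snd p))) \<in> borel_measurable (XS \<Otimes>\<^sub>M IB)"
     "(\<lambda>p. snd (fst (snd p))) \<in> borel_measurable (XS \<Otimes>\<^sub>M IB)"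
     "(\<lambda>p. snd (snd (snd p))) \<in> borel_measurable (XS \<Otimes>\<^sub>M IB)"
    by (simp_all add: IB_def)
  have "(\<lambda>p. stp n (fst p) (snd p) k) \<in> borel_measurable (XS \<Otimes>\<^sub>M IB)" for k
    unfolding stp_coord Let_def by measurable
  then show ?thesis unfolding XS_def by (rule measurable_PiM_single') simp
qed

lemma meas_stp_IM:
  assumes "sets IM = sets IB"
  shows "(\<lambda>p. stp n (fst p) (snd p)) \<in> measurable (XS \<Otimes>\<^sub>M IM) XS"
proof -
  have "measurable (XS \<Otimes>\<^sub>M IM) XS = measurable (XS \<Otimes>\<^sub>M IB) XS"
    by (rule measurable_cong_sets) (auto intro!: sets_pair_measure_cong simp: assms)
  with meas_stp show ?thesis by simp
qed

lemma meas_chain: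
  assumes "sets IM = sets IB"
  shows "(\<lambda>p. sftl_chain n (fst p) (snd p) k) \<in> measurable (XS \<Otimes>\<^sub>M PiM UNIV (\<lambda>_. IM)) XS"
proof (induction k)
  case 0
  then show ?case by simp
next
  case (Suc k)
  have c: "(\<lambda>p. snd p k) \<in> measurable (XS \<Otimes>\<^sub>M PiM UNIV (\<lambda>_. IM)) IM"
    by measurable
  have "(\<lambda>p. stp n (fst p) (snd p)) \<circ> (\<lambda>p. (sftl_chain n (fst p) (snd p) k, snd p k))
     \<in> measurable (XS \<Otimes>\<^sub>M PiM UNIV (\<lambda>_. IM)) XS"
    by (rule measurable_comp[OF measurable_Pair[OF Suc c] meas_stp_IM[OF assms]])
  then show ?case by (simp add: o_def stp_def)
qed

definition TT :: "nat \<Rightarrow> ((nat \<Rightarrow> real) \<Rightarrow> bool) \<Rightarrow> ((nat \<Rightarrow> real) \<Rightarrow> sftl_input \<Rightarrow> ennreal)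
   \<Rightarrow> (nat \<Rightarrow> real) \<Rightarrow> (nat \<Rightarrow> sftl_input) \<Rightarrow> nat \<Rightarrow> ennreal" where
  "TT n stop c x \<omega> k = (if \<forall>j\<in>{..k}. \<not> stop (sftl_chain n x \<omega> j)
      then c (sftl_chain n x \<omega> k) (\<omega> k) else 0)"

lemma TT_0: "TT n stop c x \<omega> 0 = (if stop x then 0 else c x (\<omega> 0))"
  by (simp add: TT_def)

lemma TT_Suc: "TT n stop c x \<omega> (Suc k) =
   (if stop x then 0 else TT n stop c (stp n x (\<omega> 0)) (\<lambda>i. \<omega> (Suc i)) k)"
  unfolding TT_def atMost_Suc_eq_insert_0 by (auto simp: chain_Suc_shift simp del: sftl_chain.simps(2))

lemma meas_TT:
  assumes IM: "sets IM = sets IB"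
    and stop: "Measurable.pred XS stop"
    and c: "(\<lambda>p. c (fst p) (snd p)) \<in> borel_measurable (XS \<Otimes>\<^sub>M IM)"
  shows "(\<lambda>p. TT n stop c (fst p) (snd p) k) \<in> borel_measurable (XS \<Otimes>\<^sub>M PiM UNIV (\<lambda>_. IM))"
proof -
  have [measurable]: "Measurable.pred (XS \<Otimes>\<^sub>M PiM UNIV (\<lambda>_. IM)) (\<lambda>p. stop (sftl_chain n (fst p) (snd p) j))" for j
    using measurable_compose[OF meas_chain[OF IM] stop] .
  have cc: "(\<lambda>p. (sftl_chain n (fst p) (snd p) k, snd p k)) \<in> measurable (XS \<Otimes>\<^sub>M PiM UNIV (\<lambda>_. IM)) (XS \<Otimes>\<^sub>M IM)"
    by (intro measurable_Pair meas_chain[OF IM]) measurable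
  have [measurable]: "(\<lambda>p. c (sftl_chain n (fst p) (snd p) k) (snd p k)) \<in> borel_measurable (XS \<Otimes>\<^sub>M PiM UNIV (\<lambda>_. IM))"
    using measurable_compose[OF cc c] by simp
  show ?thesis unfolding TT_def by measurable
qed

lemma rec_bound:
  assumes IM: "prob_space IM" "sets IM = sets IB"
    and stop: "Measurable.pred XS stop"
    and c: "(\<lambda>p. c (fst p) (snd p)) \<in> borel_measurable (XS \<Otimes>\<^sub>M IM)"
    and inv: "\<And>x. x \<in> R \<Longrightarrow> \<not> stop x \<Longrightarrow> AE a in IM. stp n x a \<in> R"
    and drift: "\<And>x. x \<in> R \<Longrightarrow> \<not> stop x \<Longrightarrow> (\<integral>\<^sup>+a. c x a + F (stp n x a) \<partial>IM) \<le> F x"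
  shows "x \<in> R \<Longrightarrow> (\<integral>\<^sup>+\<omega>. (\<Sum>k<N. TT n stop c x \<omega> k) \<partial>PiM UNIV (\<lambda>_. IM)) \<le> F x"
proof (induction N arbitrary: x)
  case 0
  then show ?case by simp
next
  case (Suc N)
  interpret IMp: prob_space IM by (rule IM(1))
  interpret S: sequence_space IM ..
  interpret P: pair_sigma_finite IM S.S ..
  define h where "h p = (\<Sum>k<N. TT n stop c (fst p) (snd p) k)" for p
  have hm: "h \<in> borel_measurable (XS \<Otimes>\<^sub>M S.S)"
    unfolding h_def by (intro borel_measurable_sum meas_TT[OF IM(2) stop c])
  show ?case
  proof (cases "stop x")
    case True
    then show ?thesis unfolding sum.lessThan_Suc_shift by (simp add: TT_0 TT_Suc)
  next
    case False
    have eq: "(\<Sum>k<Suc N. TT n stop c x \<omega> k) = c x (\<omega> 0) + h (stp n x (\<omega> 0), \<lambda>i. \<omega> (Suc i))" for \<omega>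
      using False unfolding sum.lessThan_Suc_shift by (simp add: TT_0 TT_Suc h_def)
    have cx: "(\<lambda>a. c x a) \<in> borel_measurable IM"
      using measurable_compose[OF measurable_Pair[OF measurable_const[of x] measurable_ident] c]
      by simp
    have sx: "(\<lambda>a. stp n x a) \<in> measurable IM XS"
      using measurable_compose[OF measurable_Pair[OF measurable_const[of x] measurable_ident] meas_stp_IM[OF IM(2)]]
      by simp
    have gm: "(\<lambda>p. c x (fst p) + h (stp n x (fst p), snd p)) \<in> borel_measurable (IM \<Otimes>\<^sub>M S.S)"
    proof -
      have "(\<lambda>p. (stp n x (fst p), snd p)) \<in> measurable (IM \<Otimes>\<^sub>M S.S) (XS \<Otimes>\<^sub>M S.S)"
        by (intro measurable_Pair measurable_compose[OF measurable_fst sx]) simp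
      from measurable_compose[OF this hm] cx show ?thesis by measurable
    qed
    have "(\<integral>\<^sup>+\<omega>. (\<Sum>k<Suc N. TT n stop c x \<omega> k) \<partial>S.S)
       = (\<integral>\<^sup>+\<omega>. c x (\<omega> 0) + h (stp n x (\<omega> 0), \<lambda>i. \<omega> (Suc i)) \<partial>S.S)"
      by (simp only: eq)
    also have "\<dots> = (\<integral>\<^sup>+p. c x (fst p) + h (stp n x (fst p), snd p) \<partial>(IM \<Otimes>\<^sub>M S.S))"
    proof -
      have m1: "(\<lambda>(s, \<omega>). case_nat s \<omega>) \<in> measurable (IM \<Otimes>\<^sub>M S.S) S.S"
        by measurable
      have m2: "(\<lambda>\<omega>. c x (\<omega> 0) + h (stp n x (\<omega> 0), \<lambda>i. \<omega> (Suc i))) \<in> borel_measurable S.S"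
      proof -
        have "(\<lambda>\<omega>. (\<omega> 0, \<lambda>i. \<omega> (Suc i))) \<in> measurable S.S (IM \<Otimes>\<^sub>M S.S)"
          by (intro measurable_Pair measurable_PiM_single') (auto simp: space_PiM)
        from measurable_compose[OF this gm] show ?thesis by simp
      qed
      show ?thesis
      proof -
        have "(\<integral>\<^sup>+\<omega>. c x (\<omega> 0) + h (stp n x (\<omega> 0), \<lambda>i. \<omega> (Suc i)) \<partial>S.S)
          = (\<integral>\<^sup>+\<omega>. c x (\<omega> 0) + h (stp n x (\<omega> 0), \<lambda>i. \<omega> (Suc i))
               \<partial>distr (IM \<Otimes>\<^sub>M S.S) S.S (\<lambda>(s, \<omega>). case_nat s \<omega>))"
          by (simp only: S.PiM_iter)
        also have "\<dots> = (\<integral>\<^sup>+p. c x (fst p) + h (stp n x (fst p), snd p) \<partial>(IM \<Otimes>\<^sub>M S.S))"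
          by (subst nn_integral_distr[OF m1]) (simp_all add: m2 split_beta')
        finally show ?thesis .
      qed
    qed
    also have "\<dots> = (\<integral>\<^sup>+a. \<integral>\<^sup>+\<omega>. c x a + h (stp n x a, \<omega>) \<partial>S.S \<partial>IM)"
      using S.nn_integral_fst[OF gm] by simp
    also have "\<dots> = (\<integral>\<^sup>+a. c x a + \<integral>\<^sup>+\<omega>. h (stp n x a, \<omega>) \<partial>S.S \<partial>IM)"
    proof (rule nn_integral_cong)
      fix a assume "a \<in> space IM"
      have hm2: "(\<lambda>\<omega>. h (stp n x a, \<omega>)) \<in> borel_measurable S.S"
        using measurable_compose[OF measurable_Pair[OF measurable_const[of "stp n x a"] measurable_ident] hm]
        by simp
      show "(\<integral>\<^sup>+\<omega>. c x a + h (stp n x a, \<omega>) \<partial>S.S) = c x a + \<integral>\<^sup>+\<omega>. h (stp n x a, \<omega>) \<partial>S.S"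
        by (subst nn_integral_add) (auto simp: hm2 S.emeasure_space_1)
    qed
    also have "\<dots> \<le> (\<integral>\<^sup>+a. c x a + F (stp n x a) \<partial>IM)"
    proof (rule nn_integral_mono_AE)
      show "AE a in IM. c x a + \<integral>\<^sup>+\<omega>. h (stp n x a, \<omega>) \<partial>S.S \<le> c x a + F (stp n x a)"
        using inv[OF Suc.prems False]
      proof (rule AE_mp, intro AE_I2 impI add_left_mono)
        fix a assume "stp n x a \<in> R"
        from Suc.IH[OF this] show "\<integral>\<^sup>+\<omega>. h (stp n x a, \<omega>) \<partial>S.S \<le> F (stp n x a)"
          by (simp add: h_def)
      qed
    qed
    also have "\<dots> \<le> F x" by (rule drift[OF Suc.prems False])
    finally show ?thesis .
  qed
qed

lemma rec_bound_inf:
  assumes IM: "prob_space IM" "sets IM = sets IB"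
    and stop: "Measurable.pred XS stop"
    and c: "(\<lambda>p. c (fst p) (snd p)) \<in> borel_measurable (XS \<Otimes>\<^sub>M IM)"
    and inv: "\<And>x. x \<in> R \<Longrightarrow> \<not> stop x \<Longrightarrow> AE a in IM. stp n x a \<in> R"
    and drift: "\<And>x. x \<in> R \<Longrightarrow> \<not> stop x \<Longrightarrow> (\<integral>\<^sup>+a. c x a + F (stp n x a) \<partial>IM) \<le> F x"
    and x: "x \<in> R"
  shows "(\<integral>\<^sup>+\<omega>. (\<Sum>k. TT n stop c x \<omega> k) \<partial>PiM UNIV (\<lambda>_. IM)) \<le> F x"
proof -
  have m: "(\<lambda>\<omega>. TT n stop c x \<omega> k) \<in> borel_measurable (PiM UNIV (\<lambda>_. IM))" for k
    using measurable_compose[OF measurable_Pair[OF measurable_const[of x] measurable_ident]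
        meas_TT[OF IM(2) stop c, of n k]] by (simp add: XS_def space_PiM)
  have "(\<integral>\<^sup>+\<omega>. (\<Sum>k. TT n stop c x \<omega> k) \<partial>PiM UNIV (\<lambda>_. IM))
      = (\<Sum>k. \<integral>\<^sup>+\<omega>. TT n stop c x \<omega> k \<partial>PiM UNIV (\<lambda>_. IM))"
    by (rule nn_integral_suminf) (rule m)
  also have "\<dots> \<le> F x"
  proof (rule suminf_le_const)
    show "summable (\<lambda>k. \<integral>\<^sup>+\<omega>. TT n stop c x \<omega> k \<partial>PiM UNIV (\<lambda>_. IM))" by simp
    fix N
    have "(\<Sum>k<N. \<integral>\<^sup>+\<omega>. TT n stop c x \<omega> k \<partial>PiM UNIV (\<lambda>_. IM))
       = (\<integral>\<^sup>+\<omega>. (\<Sum>k<N. TT n stop c x \<omega> k) \<partial>PiM UNIV (\<lambda>_. IM))"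
      by (rule nn_integral_sum[symmetric]) (simp add: m)
    also have "\<dots> \<le> F x" by (rule rec_bound[OF IM stop c inv drift x])
    finally show "(\<Sum>k<N. \<integral>\<^sup>+\<omega>. TT n stop c x \<omega> k \<partial>PiM UNIV (\<lambda>_. IM)) \<le> F x" .
  qed
  finally show ?thesis .
qed

definition ordx :: "nat \<Rightarrow> (nat \<Rightarrow> real) \<Rightarrow> bool" where
  "ordx n x = (\<forall>i\<in>{1..<n}. x (i + 1) \<le> x i)"

definition good :: "sftl_input \<Rightarrow> bool" where
  "good a = (0 \<le> fst (fst a) \<and> fst (fst a) \<le> 1 \<and> 0 \<le> snd (fst a) \<and> snd (fst a) \<le> 1
     \<and> 0 < fst (snd a) \<and> 0 < snd (snd a))"

lemma telescope: "1 \<le> (i::nat) \<Longrightarrow> (\<Sum>j\<in>{2..i}. x (j - 1) - x j) = x 1 - (x i :: real)"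
proof (induction i)
  case 0 then show ?case by simp
next
  case (Suc i)
  show ?case
  proof (cases "i = 0")
    case True then show ?thesis by simp
  next
    case False
    then have "{2..Suc i} = insert (Suc i) {2..i}" by auto
    then show ?thesis using Suc False by simp
  qed
qed

lemma ordx_le: "ordx n x \<Longrightarrow> 1 \<le> i \<Longrightarrow> i \<le> j \<Longrightarrow> j \<le> n \<Longrightarrow> x j \<le> x i"
proof (induction j)
  case 0 then show ?case by simp
next
  case (Suc j)
  show ?case
  proof (cases "i = Suc j")
    case True then show ?thesis by simp
  next
    case False
    then have "i \<le> j" using Suc by simp
    then have "x j \<le> x i" using Suc by simp
    moreover have "x (j + 1) \<le> x j" using Suc.prems \<open>i \<le> j\<close> unfolding ordx_def by auto
    ultimately show ?thesis by simp
  qed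
qed

lemma cum_eq: "1 \<le> i \<Longrightarrow> sftl_cum n x i = 1 + x 1 - x i"
  unfolding sftl_cum_def using telescope[of i x] by simp

lemma rate_eq: "1 \<le> n \<Longrightarrow> sftl_rate n x = 1 + x 1 - x n"
  unfolding sftl_rate_def using telescope[of n x] by simp

lemma rate_ge1: "ordx n x \<Longrightarrow> 1 \<le> n \<Longrightarrow> 1 \<le> sftl_rate n x"
  using ordx_le[of n x 1 n] by (simp add: rate_eq)

lemma stp_cases:
  fixes x :: "nat \<Rightarrow> real" and a :: sftl_input and n :: nat
  defines "r \<equiv> fst (fst a) * sftl_rate n x"
  shows "(r < 1 \<and> stp n x a = x(1 := x 1 + snd (snd a))) \<or>
    (\<exists>i\<in>{2..n}. 1 \<le> r \<and> sftl_cum n x (i - 1) \<le> r \<and> r < sftl_cum n x i \<and>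
        stp n x a = x(i := x i + snd (fst a) * (x (i - 1) - x i))) \<or>
    (1 \<le> r \<and> \<not> (\<exists>i\<in>{2..n}. r < sftl_cum n x i) \<and> stp n x a = x)"
proof -
  consider "r < 1" | "\<not> r < 1" "\<exists>i\<in>{2..n}. r < sftl_cum n x i" | "\<not> r < 1" "\<not> (\<exists>i\<in>{2..n}. r < sftl_cum n x i)"
    by blast
  then show ?thesis
  proof cases
    case 1 then show ?thesis by (simp add: stp_def sftl_step_def r_def Let_def)
  next
    case 2
    define i where "i = (LEAST i. 2 \<le> i \<and> i \<le> n \<and> r < sftl_cum n x i)"
    have ex: "\<exists>i. 2 \<le> i \<and> i \<le> n \<and> r < sftl_cum n x i" using 2 by auto
    have i: "2 \<le> i \<and> i \<le> n \<and> r < sftl_cum n x i"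
      unfolding i_def by (rule LeastI_ex[OF ex])
    have "sftl_cum n x (i - 1) \<le> r"
    proof (cases "i = 2")
      case True then show ?thesis using 2 by (simp add: sftl_cum_def)
    next
      case False
      then have "i - 1 < i" "2 \<le> i - 1" "i - 1 \<le> n" using i by auto
      from not_less_Least[OF this(1)[unfolded i_def]] this(2,3) show ?thesis
        by (auto simp: i_def)
    qed
    moreover have "stp n x a = x(i := x i + snd (fst a) * (x (i - 1) - x i))"
      using 2 by (simp add: stp_def sftl_step_def r_def[symmetric] Let_def i_def)
    ultimately show ?thesis using i 2 by auto
  next
    case 3
    have "stp n x a = x" using 3 unfolding stp_def sftl_step_def Let_def r_def by auto
    then show ?thesis using 3 by simp
  qed
qed

lemma stp_mono:
  assumes "ordx n x" "2 \<le> n" "good a"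
  shows "ordx n (stp n x a) \<and> (\<forall>k. x k \<le> stp n x a k)"
  using stp_cases[of a n x]
proof (elim disjE bexE conjE)
  assume st: "stp n x a = x(1 := x 1 + snd (snd a))"
  have j: "0 < snd (snd a)" using assms(3) by (simp add: good_def)
  have "ordx n (stp n x a)" unfolding ordx_def
  proof
    fix k assume k: "k \<in> {1..<n}"
    have "x (k + 1) \<le> x k" using assms(1) k by (auto simp: ordx_def)
    then show "stp n x a (k + 1) \<le> stp n x a k" using j k by (auto simp: st)
  qed
  moreover have "\<forall>k. x k \<le> stp n x a k" using j by (auto simp: st)
  ultimately show ?thesis ..
next
  fix i assume i: "i \<in> {2..n}" and st: "stp n x a = x(i := x i + snd (fst a) * (x (i - 1) - x i))"
  have g: "x i \<le> x (i - 1)" using ordx_le[OF assms(1), of "i - 1" i] i by auto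
  have v: "0 \<le> snd (fst a)" "snd (fst a) \<le> 1" using assms(3) by (auto simp: good_def)
  have lo: "x i \<le> x i + snd (fst a) * (x (i - 1) - x i)" using g v by simp
  have hi: "x i + snd (fst a) * (x (i - 1) - x i) \<le> x (i - 1)"
    using g v mult_left_le_one_le[of "x (i - 1) - x i" "snd (fst a)"] by simp
  have "ordx n (stp n x a)" unfolding ordx_def
  proof
    fix k assume k: "k \<in> {1..<n}"
    have "x (k + 1) \<le> x k" using assms(1) k by (auto simp: ordx_def)
    then show "stp n x a (k + 1) \<le> stp n x a k"
      using lo hi k i by (auto simp: st)
  qed
  moreover have "\<forall>k. x k \<le> stp n x a k" using lo by (auto simp: st)
  ultimately show ?thesis ..
next
  assume "stp n x a = x" then show ?thesis using assms by simp
qed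

lemma stp_nonleader:
  assumes "ordx n x" "2 \<le> n" "good a" "1 \<le> fst (fst a) * sftl_rate n x"
  shows "sftl_rate n (stp n x a) \<le> sftl_rate n x"
proof -
  have "stp n x a 1 = x 1"
    using stp_cases[of a n x] assms(4) by auto
  moreover have "x n \<le> stp n x a n" using stp_mono[OF assms(1-3)] by auto
  ultimately show ?thesis using assms(2) by (simp add: rate_eq)
qed

lemma cum_mono: "ordx n x \<Longrightarrow> 1 \<le> i \<Longrightarrow> i \<le> j \<Longrightarrow> j \<le> n \<Longrightarrow> sftl_cum n x i \<le> sftl_cum n x j"
  using ordx_le[of n x i j] by (simp add: cum_eq)

lemma stp_select:
  assumes "ordx n x" "i \<in> {2..n}"
    and "sftl_cum n x (i - 1) \<le> fst (fst a) * sftl_rate n x" "fst (fst a) * sftl_rate n x < sftl_cum n x i"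
  shows "stp n x a = x(i := x i + snd (fst a) * (x (i - 1) - x i))"
proof -
  have r1: "1 \<le> fst (fst a) * sftl_rate n x"
  proof -
    have h: "1 \<le> i - 1" "i - 1 \<le> n" using assms(2) by auto
    show ?thesis
      using assms(3) ordx_le[OF assms(1) _ h(1) h(2)] cum_eq[OF h(1), of n x] by simp
  qed
  from stp_cases[of a n x] r1 show ?thesis
  proof (elim disjE bexE conjE)
    fix i' assume i': "i' \<in> {2..n}" "sftl_cum n x (i' - 1) \<le> fst (fst a) * sftl_rate n x"
      "fst (fst a) * sftl_rate n x < sftl_cum n x i'"
      and st: "stp n x a = x(i' := x i' + snd (fst a) * (x (i' - 1) - x i'))"
    have "i' = i"
    proof (rule ccontr)
      assume "i' \<noteq> i"
      then consider "i' < i" | "i < i'" by linarith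
      then show False
      proof cases
        case 1
        then have h: "i' \<le> i - 1" "i - 1 \<le> n" "1 \<le> i'" using assms(2) i'(1) by auto
        show ?thesis using cum_mono[OF assms(1) h(3) h(1) h(2)] i' assms(3,4) by auto
      next
        case 2
        then have h: "i \<le> i' - 1" "i' - 1 \<le> n" "1 \<le> i" using assms(2) i'(1) by auto
        show ?thesis using cum_mono[OF assms(1) h(3) h(1) h(2)] i' assms(3,4) by auto
      qed
    qed
    then show ?thesis using st by simp
  next
    assume "fst (fst a) * sftl_rate n x < 1" then show ?thesis using r1 by simp
  next
    assume "\<not> (\<exists>i\<in>{2..n}. fst (fst a) * sftl_rate n x < sftl_cum n x i)"
    then show ?thesis using assms(2,4) by auto
  qed
qed

lemma prob_pair: "prob_space A \<Longrightarrow> prob_space B \<Longrightarrow> prob_space (A \<Otimes>\<^sub>M B)"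
proof -
  assume "prob_space A" "prob_space B"
  then interpret A: prob_space A + B: prob_space B .
  interpret pair_prob_space A B ..
  show ?thesis by (rule P.prob_space_axioms)
qed

definition UU :: "real measure" where "UU = uniform_measure lborel {0..1}"

lemma prob_UU: "prob_space UU"
  unfolding UU_def by (rule prob_space_uniform_measure) auto

lemma sets_UU[measurable_cong]: "sets UU = sets borel"
  by (simp add: UU_def)

lemma nn_integral_fst_prob:
  assumes "prob_space A" "prob_space B" "h \<in> borel_measurable A"
  shows "(\<integral>\<^sup>+x. h (fst x) \<partial>(A \<Otimes>\<^sub>M B)) = (\<integral>\<^sup>+x. h x \<partial>A)"
proof -
  interpret A: prob_space A by fact
  interpret B: prob_space B by fact
  interpret pair_prob_space A B ..
  have "(\<integral>\<^sup>+x. h (fst x) \<partial>(A \<Otimes>\<^sub>M B)) = (\<integral>\<^sup>+x. \<integral>\<^sup>+y. h (fst (x, y)) \<partial>B \<partial>A)"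
    by (rule B.nn_integral_fst[symmetric]) (use assms(3) in measurable)
  also have "\<dots> = (\<integral>\<^sup>+x. h x \<partial>A)"
    by (simp add: B.emeasure_space_1)
  finally show ?thesis .
qed

lemma nn_integral_snd_prob:
  assumes "prob_space A" "prob_space B" "h \<in> borel_measurable B"
  shows "(\<integral>\<^sup>+x. h (snd x) \<partial>(A \<Otimes>\<^sub>M B)) = (\<integral>\<^sup>+x. h x \<partial>B)"
proof -
  interpret A: prob_space A by fact
  interpret B: prob_space B by fact
  interpret pair_prob_space A B ..
  have "(\<integral>\<^sup>+x. h (snd x) \<partial>(A \<Otimes>\<^sub>M B)) = (\<integral>\<^sup>+x. \<integral>\<^sup>+y. h (snd (x, y)) \<partial>B \<partial>A)"
    by (rule B.nn_integral_fst[symmetric]) (use assms(3) in measurable)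
  also have "\<dots> = (\<integral>\<^sup>+y. h y \<partial>B)"
    by (simp add: A.emeasure_space_1)
  finally show ?thesis .
qed

lemma nn_integral_prod_prob:
  assumes "prob_space A" "prob_space B" "f \<in> borel_measurable A" "g \<in> borel_measurable B"
  shows "(\<integral>\<^sup>+x. f (fst x) * g (snd x) \<partial>(A \<Otimes>\<^sub>M B)) = (\<integral>\<^sup>+x. f x \<partial>A) * (\<integral>\<^sup>+y. g y \<partial>B)"
proof -
  interpret A: prob_space A by fact
  interpret B: prob_space B by fact
  interpret pair_prob_space A B ..
  have "(\<integral>\<^sup>+x. f (fst x) * g (snd x) \<partial>(A \<Otimes>\<^sub>M B)) = (\<integral>\<^sup>+x. \<integral>\<^sup>+y. f (fst (x, y)) * g (snd (x, y)) \<partial>B \<partial>A)"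
    by (rule B.nn_integral_fst[symmetric]) (use assms(3,4) in measurable)
  also have "\<dots> = (\<integral>\<^sup>+x. f x * (\<integral>\<^sup>+y. g y \<partial>B) \<partial>A)"
    by (simp add: nn_integral_cmult assms(4))
  also have "\<dots> = (\<integral>\<^sup>+x. f x \<partial>A) * (\<integral>\<^sup>+y. g y \<partial>B)"
    by (simp add: nn_integral_multc assms(3))
  finally show ?thesis .
qed

lemma UU_integral: "f \<in> borel_measurable borel \<Longrightarrow> (\<integral>\<^sup>+x. f x \<partial>UU) = (\<integral>\<^sup>+x. f x * indicator {0..1} x \<partial>lborel)"
  unfolding UU_def by (subst nn_integral_uniform_measure) (auto simp: divide_ennreal_def)

lemma UU_ind:
  fixes c1 c2 R :: real
  assumes "0 \<le> c1" "c1 \<le> c2" "c2 \<le> R" "0 < R"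
  shows "(\<integral>\<^sup>+u. ennreal (if c1 \<le> u * R \<and> u * R < c2 then 1 else 0) \<partial>UU) = ennreal ((c2 - c1) / R)"
proof -
  have eq: "ennreal (if c1 \<le> u * R \<and> u * R < c2 then 1 else 0) * indicator {0..1} u = indicator {c1 / R..<c2 / R} u" for u
  proof -
    have "c1 \<le> u * R \<longleftrightarrow> c1 / R \<le> u" "u * R < c2 \<longleftrightarrow> u < c2 / R"
      using assms(4) by (auto simp: field_simps)
    moreover have "c1 / R \<ge> 0" "c2 / R \<le> 1" using assms by (auto simp: field_simps)
    ultimately show ?thesis by (auto simp: indicator_def)
  qed
  have "(\<integral>\<^sup>+u. ennreal (if c1 \<le> u * R \<and> u * R < c2 then 1 else 0) \<partial>UU)
      = (\<integral>\<^sup>+u. indicator {c1 / R..<c2 / R} u \<partial>lborel)"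
    by (subst UU_integral) (simp_all add: eq)
  also have "\<dots> = ennreal (c2 / R - c1 / R)"
    using assms by (simp add: divide_right_mono)
  finally show ?thesis by (simp add: diff_divide_distrib)
qed

lemma UU_lead:
  fixes R :: real
  assumes "1 \<le> R"
  shows "(\<integral>\<^sup>+u. ennreal (if u * R < 1 then 1 else 0) \<partial>UU) \<le> ennreal (1 / R)"
proof -
  have le: "ennreal (if u * R < 1 then 1 else 0) * indicator {0..1} u \<le> indicator {0..1 / R} u" for u
    using assms by (auto simp: indicator_def field_simps)
  have "(\<integral>\<^sup>+u. ennreal (if u * R < 1 then 1 else 0) \<partial>UU)
      = (\<integral>\<^sup>+u. ennreal (if u * R < 1 then 1 else 0) * indicator {0..1} u \<partial>lborel)"
    by (subst UU_integral) simp_all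
  also have "\<dots> \<le> (\<integral>\<^sup>+u. indicator {0..1 / R} u \<partial>lborel)"
    by (rule nn_integral_mono) (rule le)
  also have "\<dots> = ennreal (1 / R)" using assms by simp
  finally show ?thesis .
qed

lemma UU_v: "(\<integral>\<^sup>+v. ennreal v \<partial>UU) \<ge> ennreal (1 / 4)"
proof -
  have le: "ennreal (1 / 2) * indicator {1 / 2..1} v \<le> ennreal v * indicator {0..1} v" for v :: real
  proof (cases "1 / 2 \<le> v \<and> v \<le> 1")
    case True
    then have "ennreal (1 / 2) \<le> ennreal v" by (intro ennreal_leI) simp
    then show ?thesis using True by (simp add: indicator_def)
  qed (auto simp: indicator_def)
  have e1: "(\<integral>\<^sup>+v. ennreal (1 / 2) * indicator {1 / 2..1::real} v \<partial>lborel) = ennreal (1 / 2) * ennreal (1 / 2)"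
    by (simp add: nn_integral_cmult)
  have e2: "ennreal (1 / 2) * ennreal (1 / 2) = ennreal (1 / 4)"
    by (subst ennreal_mult[symmetric]) auto
  have "ennreal (1 / 4) = (\<integral>\<^sup>+v. ennreal (1 / 2) * indicator {1 / 2..1::real} v \<partial>lborel)"
    using e1 e2 by simp
  also have "\<dots> \<le> (\<integral>\<^sup>+v. ennreal v * indicator {0..1} v \<partial>lborel)"
    by (rule nn_integral_mono) (rule le)
  also have "\<dots> = (\<integral>\<^sup>+v. ennreal v \<partial>UU)"
    by (subst UU_integral) simp_all
  finally show ?thesis .
qed

lemma Exp_mean: "(\<integral>\<^sup>+e. ennreal (max 0 e) \<partial>density lborel (exponential_density 1)) = 1"
proof -
  have "(\<integral>\<^sup>+e. ennreal (max 0 e) \<partial>density lborel (exponential_density 1))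
      = (\<integral>\<^sup>+e. ennreal (exponential_density 1 e * e ^ 1) \<partial>lborel)"
    by (subst nn_integral_density)
       (auto intro!: nn_integral_cong simp: ennreal_mult[symmetric] exponential_density_def)
  also have "\<dots> = 1"
    by (subst nn_integral_erlang_ith_moment) auto
  finally show ?thesis .
qed

context
  fixes \<theta> :: "real measure"
  assumes th: "prob_space \<theta>" "sets \<theta> = sets borel" "emeasure \<theta> {x. x \<le> 0} = 0"
begin

lemma IM_prob: "prob_space (sftl_input_measure \<theta>)"
  unfolding sftl_input_measure_def
  by (intro prob_pair prob_UU[unfolded UU_def] prob_space_uniform_measure prob_space_exponential_density th) auto

lemma IM_sets: "sets (sftl_input_measure \<theta>) = sets IB"
  unfolding sftl_input_measure_def IB_def
  by (intro sets_pair_measure_cong) (auto simp: th)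

lemma IM_AE_good: "AE a in sftl_input_measure \<theta>. good a"
proof -
  interpret U: prob_space UU by (rule prob_UU)
  interpret UP: pair_sigma_finite UU UU ..
  interpret Ex: prob_space "density lborel (exponential_density 1)"
    by (rule prob_space_exponential_density) simp
  interpret Th: prob_space \<theta> by (rule th)
  interpret EP: pair_sigma_finite "density lborel (exponential_density 1)" \<theta> ..
  interpret P: pair_sigma_finite "UU \<Otimes>\<^sub>M UU" "density lborel (exponential_density 1) \<Otimes>\<^sub>M \<theta>" ..
  have u: "AE u in UU. 0 \<le> u \<and> u \<le> 1"
    unfolding UU_def by (rule AE_uniform_measureI) auto
  have uv: "AE p in UU \<Otimes>\<^sub>M UU. (0 \<le> fst p \<and> fst p \<le> 1) \<and> (0 \<le> snd p \<and> snd p \<le> 1)"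
  proof (rule UP.AE_pair_measure)
    show "{x \<in> space (UU \<Otimes>\<^sub>M UU). (0 \<le> fst x \<and> fst x \<le> 1) \<and> 0 \<le> snd x \<and> snd x \<le> 1} \<in> sets (UU \<Otimes>\<^sub>M UU)"
      by measurable
    show "AE x in UU. AE y in UU. (0 \<le> fst (x, y) \<and> fst (x, y) \<le> 1) \<and> 0 \<le> snd (x, y) \<and> snd (x, y) \<le> 1"
      apply (rule AE_mp[OF u]) apply (rule AE_I2) apply (rule impI)
      apply (rule AE_mp[OF u]) apply (rule AE_I2) by simp
  qed
  have e: "AE e in density lborel (exponential_density 1). 0 < e"
  proof -
    have "AE e in lborel. e \<noteq> 0" by (rule AE_lborel_singleton)
    then show ?thesis
      by (subst AE_density) (auto elim!: AE_mp simp: exponential_density_def)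
  qed
  have j: "AE j in \<theta>. 0 < j"
  proof (rule AE_I')
    show "{x. x \<le> 0} \<in> null_sets \<theta>" using th by (auto simp: null_sets_def)
  qed auto
  have ej: "AE p in density lborel (exponential_density 1) \<Otimes>\<^sub>M \<theta>. 0 < fst p \<and> 0 < snd p"
  proof (rule EP.AE_pair_measure)
    show "{x \<in> space (density lborel (exponential_density 1) \<Otimes>\<^sub>M \<theta>). 0 < fst x \<and> 0 < snd x}
       \<in> sets (density lborel (exponential_density 1) \<Otimes>\<^sub>M \<theta>)"
      using th(2) by measurable
    show "AE x in density lborel (exponential_density 1). AE y in \<theta>. 0 < fst (x, y) \<and> 0 < snd (x, y)"
      apply (rule AE_mp[OF e]) apply (rule AE_I2) apply (rule impI)
      apply (rule AE_mp[OF j]) apply (rule AE_I2) by simp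
  qed
  have "AE p in sftl_input_measure \<theta>. good p"
    unfolding sftl_input_measure_def UU_def[symmetric] good_def
  proof (rule P.AE_pair_measure)
    show "{x \<in> space ((UU \<Otimes>\<^sub>M UU) \<Otimes>\<^sub>M (density lborel (exponential_density 1) \<Otimes>\<^sub>M \<theta>)).
        0 \<le> fst (fst x) \<and> fst (fst x) \<le> 1 \<and> 0 \<le> snd (fst x) \<and> snd (fst x) \<le> 1 \<and> 0 < fst (snd x) \<and> 0 < snd (snd x)}
       \<in> sets ((UU \<Otimes>\<^sub>M UU) \<Otimes>\<^sub>M (density lborel (exponential_density 1) \<Otimes>\<^sub>M \<theta>))"
      using th(2) by measurable
    show "AE x in UU \<Otimes>\<^sub>M UU. AE y in density lborel (exponential_density 1) \<Otimes>\<^sub>M \<theta>.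
        0 \<le> fst (fst (x, y)) \<and> fst (fst (x, y)) \<le> 1 \<and> 0 \<le> snd (fst (x, y)) \<and> snd (fst (x, y)) \<le> 1 \<and> 0 < fst (snd (x, y)) \<and> 0 < snd (snd (x, y))"
      apply (rule AE_mp[OF uv]) apply (rule AE_I2) apply (rule impI)
      apply (rule AE_mp[OF ej]) apply (rule AE_I2) by simp
  qed
  then show ?thesis .
qed

end

definition GG :: "nat \<Rightarrow> nat \<Rightarrow> (nat \<Rightarrow> real) \<Rightarrow> real" where
  "GG n' m x = (\<Sum>i\<in>{Suc (n' + 2 - m)..n'}. min (x i) 1)"

definition gt :: "(nat \<Rightarrow> real) \<Rightarrow> nat \<Rightarrow> real" where
  "gt x i = min (x (i - 1)) 1 - min (x i) 1"

definition ind :: "nat \<Rightarrow> (nat \<Rightarrow> real) \<Rightarrow> real \<Rightarrow> nat \<Rightarrow> real" where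
  "ind n x u i = (if sftl_cum n x (i - 1) \<le> u * sftl_rate n x \<and> u * sftl_rate n x < sftl_cum n x i then 1 else 0)"

lemma tele2: "a \<le> b \<Longrightarrow> (\<Sum>i\<in>{Suc a..b}. f (i - 1) - f i) = f a - (f b :: real)"
proof (induction b)
  case 0 then show ?case by simp
next
  case (Suc b)
  show ?case
  proof (cases "a = Suc b")
    case True then show ?thesis by simp
  next
    case False
    then have "a \<le> b" using Suc by simp
    moreover have "{Suc a..Suc b} = insert (Suc b) {Suc a..b}" using \<open>a \<le> b\<close> by auto
    ultimately show ?thesis using Suc by simp
  qed
qed

lemma ind_unique:
  assumes "ordx n x" "i \<in> {2..n}" "i' \<in> {2..n}" "ind n x u i = 1" "ind n x u i' = 1"
  shows "i = i'"
proof (rule ccontr)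
  assume ne: "i \<noteq> i'"
  have A: False if "k \<in> {2..n}" "k' \<in> {2..n}" "k < k'" "ind n x u k = 1" "ind n x u k' = 1" for k k'
  proof -
    have h: "k \<le> k' - 1" "k' - 1 \<le> n" "1 \<le> k" using that by auto
    show False using cum_mono[OF assms(1) h(3) h(1) h(2)] that(4,5)
      by (auto simp: ind_def split: if_splits)
  qed
  from ne consider "i < i'" | "i' < i" by linarith
  then show False using A assms by metis
qed

lemma min_concave:
  fixes y z v :: real
  assumes "y \<le> z" "0 \<le> v" "v \<le> 1"
  shows "v * (min z 1 - min y 1) \<le> min (y + v * (z - y)) 1 - min y 1"
proof -
  define t where "t = v * (z - y)"
  have t0: "0 \<le> t" using assms by (simp add: t_def)
  have t1: "t \<le> z - y" using assms mult_left_le_one_le[of "z - y" v] by (simp add: t_def)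
  have t2: "1 \<le> z \<Longrightarrow> v * (1 - y) \<le> t" using assms unfolding t_def by (intro mult_left_mono) auto
  have t3: "y \<le> 1 \<Longrightarrow> v * (1 - y) \<le> 1 - y" using assms mult_left_le_one_le[of "1 - y" v] by simp
  have t4: "v * (min z 1 - min y 1) = (if y \<ge> 1 then 0 else if z \<le> 1 then t else v * (1 - y))"
    using assms by (auto simp: t_def min_def)
  show ?thesis unfolding t_def[symmetric] t4 using t0 t1 t2 t3 by (auto simp: min_def)
qed

lemma D1:
  assumes "ordx n x" "2 \<le> n" "good a" "I \<subseteq> {2..n}" "finite I"
  shows "(\<Sum>i\<in>I. ind n x (fst (fst a)) i * snd (fst a) * gt x i)
     \<le> (\<Sum>i\<in>I. min (stp n x a i) 1) - (\<Sum>i\<in>I. min (x i) 1)"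
proof -
  have mono: "\<forall>k. x k \<le> stp n x a k" using stp_mono[OF assms(1-3)] by simp
  have rhs: "(\<Sum>i\<in>I. min (stp n x a i) 1) - (\<Sum>i\<in>I. min (x i) 1) = (\<Sum>i\<in>I. min (stp n x a i) 1 - min (x i) 1)"
    by (simp add: sum_subtractf)
  show ?thesis
  proof (cases "\<exists>i\<in>I. ind n x (fst (fst a)) i = 1")
    case False
    then have "ind n x (fst (fst a)) i = 0" if "i \<in> I" for i
      using that by (auto simp: ind_def split: if_splits)
    then have "(\<Sum>i\<in>I. ind n x (fst (fst a)) i * snd (fst a) * gt x i) = 0" by simp
    moreover have "0 \<le> (\<Sum>i\<in>I. min (stp n x a i) 1 - min (x i) 1)"
      using mono by (intro sum_nonneg) (smt (verit) min.mono)
    ultimately show ?thesis using rhs by simp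
  next
    case True
    then obtain i where i: "i \<in> I" "ind n x (fst (fst a)) i = 1" by blast
    have i2: "i \<in> {2..n}" using i assms(4) by auto
    have others: "ind n x (fst (fst a)) k = 0" if "k \<in> I" "k \<noteq> i" for k
    proof -
      have k2: "k \<in> {2..n}" using that assms(4) by auto
      have "ind n x (fst (fst a)) k \<noteq> 1"
      proof
        assume "ind n x (fst (fst a)) k = 1"
        from ind_unique[OF assms(1) i2 k2 i(2) this] that show False by simp
      qed
      then show ?thesis by (auto simp: ind_def)
    qed
    have lhs: "(\<Sum>k\<in>I. ind n x (fst (fst a)) k * snd (fst a) * gt x k) = snd (fst a) * gt x i"
    proof -
      have "(\<Sum>k\<in>I. ind n x (fst (fst a)) k * snd (fst a) * gt x k) = (\<Sum>k\<in>I. if k = i then snd (fst a) * gt x i else 0)"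
        using others i by (intro sum.cong) auto
      also have "\<dots> = snd (fst a) * gt x i" using i assms(5) by simp
      finally show ?thesis .
    qed
    have st: "stp n x a = x(i := x i + snd (fst a) * (x (i - 1) - x i))"
      using i(2) by (intro stp_select[OF assms(1) i2]) (auto simp: ind_def split: if_splits)
    have r2: "(\<Sum>k\<in>I. min (stp n x a k) 1 - min (x k) 1) = min (x i + snd (fst a) * (x (i - 1) - x i)) 1 - min (x i) 1"
    proof -
      have "(\<Sum>k\<in>I. min (stp n x a k) 1 - min (x k) 1) = (\<Sum>k\<in>I. if k = i then min (x i + snd (fst a) * (x (i - 1) - x i)) 1 - min (x i) 1 else 0)"
        by (intro sum.cong) (auto simp: st)
      also have "\<dots> = min (x i + snd (fst a) * (x (i - 1) - x i)) 1 - min (x i) 1" using i assms(5) by simp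
      finally show ?thesis .
    qed
    have "x i \<le> x (i - 1)" using ordx_le[OF assms(1), of "i - 1" i] i2 by auto
    then have "snd (fst a) * gt x i \<le> min (x i + snd (fst a) * (x (i - 1) - x i)) 1 - min (x i) 1"
      using assms(3) unfolding gt_def good_def by (intro min_concave) auto
    then show ?thesis using lhs r2 rhs by simp
  qed
qed

definition cost :: "nat \<Rightarrow> (nat \<Rightarrow> real) \<Rightarrow> sftl_input \<Rightarrow> ennreal" where
  "cost n x a = ennreal (max 0 (fst (snd a)) / sftl_rate n x + 1 / sftl_rate n x
     + (if fst (fst a) * sftl_rate n x < 1 then 1 else 0))"

lemma meas_GG: "f \<in> measurable M XS \<Longrightarrow> (\<lambda>w. GG n' m (f w)) \<in> borel_measurable M"
proof -
  assume f: "f \<in> measurable M XS"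
  have [measurable]: "(\<lambda>w. f w i) \<in> borel_measurable M" for i by (rule meas_XS_comp[OF f])
  show ?thesis unfolding GG_def by measurable
qed

lemma meas_cost_IB: "(\<lambda>p. cost n (fst p) (snd p)) \<in> borel_measurable (XS \<Otimes>\<^sub>M IB)"
proof -
  have F[measurable]: "fst \<in> measurable (XS \<Otimes>\<^sub>M IB) XS" by simp
  have [measurable]: "(\<lambda>p. fst (fst (snd p))) \<in> borel_measurable (XS \<Otimes>\<^sub>M IB)"
     "(\<lambda>p. fst (snd (snd p))) \<in> borel_measurable (XS \<Otimes>\<^sub>M IB)"
    by (simp_all add: IB_def)
  show ?thesis unfolding cost_def by measurable
qed

context
  fixes \<theta> :: "real measure"
  assumes th: "prob_space \<theta>" "sets \<theta> = sets borel" "emeasure \<theta> {x. x \<le> 0} = 0"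
begin

abbreviation "IM \<equiv> sftl_input_measure \<theta>"
abbreviation "EE \<equiv> density lborel (exponential_density 1)"

lemma IM_eq: "IM = (UU \<Otimes>\<^sub>M UU) \<Otimes>\<^sub>M (EE \<Otimes>\<^sub>M \<theta>)"
  by (simp add: sftl_input_measure_def UU_def)

lemma probs: "prob_space UU" "prob_space EE" "prob_space (UU \<Otimes>\<^sub>M UU)" "prob_space (EE \<Otimes>\<^sub>M \<theta>)"
  "prob_space IM"
  by (auto intro!: prob_pair prob_UU prob_space_exponential_density th IM_prob[OF th])

lemma meas_cost: "(\<lambda>p. cost n (fst p) (snd p)) \<in> borel_measurable (XS \<Otimes>\<^sub>M IM)"
proof -
  have "measurable (XS \<Otimes>\<^sub>M IM) (borel :: ennreal measure) = measurable (XS \<Otimes>\<^sub>M IB) borel"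
    by (rule measurable_cong_sets) (auto intro!: sets_pair_measure_cong simp: IM_sets[OF th])
  then show ?thesis using meas_cost_IB[of n] by simp
qed

lemma stp_x_meas: "(\<lambda>a. stp n x a) \<in> measurable IM XS"
  using measurable_compose[OF measurable_Pair[OF measurable_const[of x] measurable_ident] meas_stp_IM[OF IM_sets[OF th]]]
  by simp

lemma IM_u: "h \<in> borel_measurable borel \<Longrightarrow> (\<integral>\<^sup>+a. h (fst (fst a)) \<partial>IM) = (\<integral>\<^sup>+u. h u \<partial>UU)"
proof -
  assume [measurable]: "h \<in> borel_measurable borel"
  have "(\<integral>\<^sup>+a. h (fst (fst a)) \<partial>IM) = (\<integral>\<^sup>+p. h (fst p) \<partial>(UU \<Otimes>\<^sub>M UU))"
    unfolding IM_eq by (rule nn_integral_fst_prob[OF probs(3,4)]) measurable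
  also have "\<dots> = (\<integral>\<^sup>+u. h u \<partial>UU)"
    by (rule nn_integral_fst_prob[OF probs(1,1)]) measurable
  finally show ?thesis .
qed

lemma IM_uv: "f \<in> borel_measurable borel \<Longrightarrow> g \<in> borel_measurable borel \<Longrightarrow>
  (\<integral>\<^sup>+a. f (fst (fst a)) * g (snd (fst a)) \<partial>IM) = (\<integral>\<^sup>+u. f u \<partial>UU) * (\<integral>\<^sup>+v. g v \<partial>UU)"
proof -
  assume [measurable]: "f \<in> borel_measurable borel" "g \<in> borel_measurable borel"
  have "(\<integral>\<^sup>+a. f (fst (fst a)) * g (snd (fst a)) \<partial>IM) = (\<integral>\<^sup>+p. f (fst p) * g (snd p) \<partial>(UU \<Otimes>\<^sub>M UU))"
    unfolding IM_eq by (rule nn_integral_fst_prob[OF probs(3,4), of "\<lambda>p. f (fst p) * g (snd p)"]) measurable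
  also have "\<dots> = (\<integral>\<^sup>+u. f u \<partial>UU) * (\<integral>\<^sup>+v. g v \<partial>UU)"
    by (rule nn_integral_prod_prob[OF probs(1,1)]) measurable
  finally show ?thesis .
qed

lemma IM_e: "h \<in> borel_measurable borel \<Longrightarrow> (\<integral>\<^sup>+a. h (fst (snd a)) \<partial>IM) = (\<integral>\<^sup>+e. h e \<partial>EE)"
proof -
  assume [measurable]: "h \<in> borel_measurable borel"
  have "(\<integral>\<^sup>+a. h (fst (snd a)) \<partial>IM) = (\<integral>\<^sup>+p. h (fst p) \<partial>(EE \<Otimes>\<^sub>M \<theta>))"
    unfolding IM_eq by (rule nn_integral_snd_prob[OF probs(3,4), of "\<lambda>p. h (fst p)"]) measurable
  also have "\<dots> = (\<integral>\<^sup>+e. h e \<partial>EE)"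
    by (rule nn_integral_fst_prob[OF probs(2) th(1)]) measurable
  finally show ?thesis .
qed

lemma cost_int:
  assumes "ordx n x" "1 \<le> n"
  shows "(\<integral>\<^sup>+a. cost n x a \<partial>IM) \<le> ennreal (3 / sftl_rate n x)"
proof -
  define R where "R = sftl_rate n x"
  have R: "1 \<le> R" using rate_ge1[OF assms] by (simp add: R_def)
  have eq: "cost n x a = ennreal (max 0 (fst (snd a))) * ennreal (1 / R) + ennreal (1 / R)
     + ennreal (if fst (fst a) * R < 1 then 1 else 0)" for a
  proof -
    define A where "A = max 0 (fst (snd a))"
    define L where "L = (if fst (fst a) * R < 1 then 1 else 0::real)"
    have nn: "0 \<le> A" "0 \<le> 1 / R" "0 \<le> L" "0 \<le> A / R" using R by (auto simp: A_def L_def)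
    have "cost n x a = ennreal (A / R + 1 / R + L)" by (simp add: cost_def A_def L_def R_def)
    also have "\<dots> = ennreal (A / R + 1 / R) + ennreal L" by (rule ennreal_plus) (use nn in auto)
    also have "ennreal (A / R + 1 / R) = ennreal (A / R) + ennreal (1 / R)" by (rule ennreal_plus) (use nn in auto)
    also have "ennreal (A / R) = ennreal A * ennreal (1 / R)"
      using ennreal_mult[OF nn(1) nn(2)] by simp
    finally show ?thesis by (simp add: A_def L_def)
  qed
  have m1[measurable]: "(\<lambda>a. fst (snd a)) \<in> borel_measurable IM" "(\<lambda>a. fst (fst a)) \<in> borel_measurable IM"
    by (simp_all add: measurable_cong_sets[OF IM_sets[OF th] refl] IB_def)
  have "(\<integral>\<^sup>+a. cost n x a \<partial>IM) = (\<integral>\<^sup>+a. ennreal (max 0 (fst (snd a))) * ennreal (1 / R) \<partial>IM)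
      + (\<integral>\<^sup>+a. ennreal (1 / R) \<partial>IM) + (\<integral>\<^sup>+a. ennreal (if fst (fst a) * R < 1 then 1 else 0) \<partial>IM)"
    unfolding eq by (subst nn_integral_add; (subst nn_integral_add)?) auto
  also have "(\<integral>\<^sup>+a. ennreal (max 0 (fst (snd a))) * ennreal (1 / R) \<partial>IM) = ennreal (1 / R)"
    using IM_e[of "\<lambda>e. ennreal (max 0 e) * ennreal (1 / R)"]
    using Exp_mean by (simp add: nn_integral_multc)
  also have "(\<integral>\<^sup>+a. ennreal (1 / R) \<partial>IM) = ennreal (1 / R)"
    using prob_space.emeasure_space_1[OF probs(5)] by simp
  also have "(\<integral>\<^sup>+a. ennreal (if fst (fst a) * R < 1 then 1 else 0) \<partial>IM) \<le> ennreal (1 / R)"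
    using IM_u[of "\<lambda>u. ennreal (if u * R < 1 then 1 else 0)"] UU_lead[OF R] by simp
  finally have "(\<integral>\<^sup>+a. cost n x a \<partial>IM) \<le> ennreal (1 / R) + ennreal (1 / R) + ennreal (1 / R)"
    by (simp add: add_left_mono)
  also have "\<dots> = ennreal (3 / R)"
    using R by (simp add: ennreal_plus[symmetric] del: ennreal_plus)
  finally show ?thesis by (simp add: R_def)
qed

end

lemma real_bound:
  fixes gt g :: "nat \<Rightarrow> real" and I :: "nat set" and K R :: real
  assumes "finite I" "card I = m - 2" "3 \<le> m" "\<And>i. i \<in> I \<Longrightarrow> 0 \<le> gt i \<and> gt i \<le> g i"
    "3 / 4 \<le> (\<Sum>i\<in>I. gt i)" "K = 22 * real m" "0 < R"
  shows "3 / R \<le> (\<Sum>i\<in>I. K * gt i * g i / (4 * R))"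
proof -
  have cs: "(\<Sum>i\<in>I. 1 * gt i)\<^sup>2 \<le> (\<Sum>i\<in>I. 1\<^sup>2) * (\<Sum>i\<in>I. (gt i)\<^sup>2)"
    by (rule Cauchy_Schwarz_ineq_sum)
  have c: "(\<Sum>i\<in>I. (1::real)\<^sup>2) = real m - 2" using assms(2,3) by simp
  have "(3/4)\<^sup>2 \<le> (\<Sum>i\<in>I. gt i)\<^sup>2" using assms(5) by (intro power_mono) auto
  then have sq: "9 / 16 \<le> (real m - 2) * (\<Sum>i\<in>I. (gt i)\<^sup>2)" using cs c by (simp add: power2_eq_square)
  have "(\<Sum>i\<in>I. (gt i)\<^sup>2) \<le> (\<Sum>i\<in>I. gt i * g i)"
    using assms(4) by (intro sum_mono) (auto simp: power2_eq_square intro: mult_left_mono)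
  moreover have "0 \<le> real m - 2" using assms(3) by simp
  ultimately have "(real m - 2) * (\<Sum>i\<in>I. (gt i)\<^sup>2) \<le> (real m - 2) * (\<Sum>i\<in>I. gt i * g i)"
    by (intro mult_left_mono)
  with sq have s2: "9 / 16 \<le> (real m - 2) * (\<Sum>i\<in>I. gt i * g i)" by linarith
  have pos: "0 \<le> (\<Sum>i\<in>I. gt i * g i)"
    using assms(4) by (intro sum_nonneg) (metis mult_nonneg_nonneg order_trans)
  have "(\<Sum>i\<in>I. K * gt i * g i / (4 * R)) = K / (4 * R) * (\<Sum>i\<in>I. gt i * g i)"
  proof -
    have "K * gt i * g i / (4 * R) = K / (4 * R) * (gt i * g i)" for i by simp
    then show ?thesis by (simp only: sum_distrib_left)
  qed
  moreover have "3 / R \<le> K / (4 * R) * (\<Sum>i\<in>I. gt i * g i)"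
  proof -
    have m3: "3 \<le> real m" using assms(3) by simp
    have "12 \<le> K * (\<Sum>i\<in>I. gt i * g i)"
    proof -
      have "(real m - 2) * 12 \<le> (real m - 2) * (K * (\<Sum>i\<in>I. gt i * g i))"
      proof -
        have "(real m - 2) * 12 \<le> 22 * real m * (9 / 16)" using m3 by simp
        also have "\<dots> \<le> 22 * real m * ((real m - 2) * (\<Sum>i\<in>I. gt i * g i))"
          using s2 m3 by (intro mult_left_mono) auto
        finally show ?thesis using assms(6) by (simp add: algebra_simps)
      qed
      then show ?thesis by (rule mult_left_le_imp_le) (use m3 in simp)
    qed
    then show ?thesis using assms(7) by (simp add: field_simps)
  qed
  ultimately show ?thesis by simp
qed

context
  fixes \<theta> :: "real measure"
  assumes th: "prob_space \<theta>" "sets \<theta> = sets borel" "emeasure \<theta> {x. x \<le> 0} = 0"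
begin

lemma drift:
  assumes m3: "3 \<le> m" and mn: "m \<le> n" and n'1: "m - 1 \<le> n'" and n'2: "n' \<le> n - 1"
    and ox: "ordx n x" and xa: "1 \<le> x (n' + 2 - m)" and xn: "x n' < 1 / (2 * exp 1)"
  shows "(\<integral>\<^sup>+a. cost n x a + ennreal (22 * real m * (real m - GG n' m (stp n x a))) \<partial>IM \<theta>)
     \<le> ennreal (22 * real m * (real m - GG n' m x))"
proof -
  define a0 where "a0 = n' + 2 - m"
  define I where "I = {Suc a0..n'}"
  define K where "K = 22 * real m"
  define R where "R = sftl_rate n x"
  interpret IMp: prob_space "IM \<theta>" by (rule probs(5)[OF th])
  have n2: "2 \<le> n" using m3 mn by simp
  have a0: "1 \<le> a0" "a0 < n'" using m3 n'1 by (auto simp: a0_def)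
  have I2: "I \<subseteq> {2..n}" using a0 n'2 n2 by (auto simp: I_def)
  have fI: "finite I" by (simp add: I_def)
  have cI: "card I = m - 2" using m3 n'1 by (simp add: I_def a0_def)
  have R1: "1 \<le> R" using rate_ge1[OF ox] n2 by (simp add: R_def)
  have GGI: "GG n' m y = (\<Sum>i\<in>I. min (y i) 1)" for y by (simp add: GG_def I_def a0_def)
  have GGle: "GG n' m y \<le> real m - 2" for y
  proof -
    have "(\<Sum>i\<in>I. min (y i) 1) \<le> (\<Sum>i\<in>I. 1)" by (intro sum_mono) simp
    then show ?thesis using cI m3 by (simp add: GGI)
  qed
  have gt_nn: "0 \<le> gt x i \<and> gt x i \<le> x (i - 1) - x i" if "i \<in> I" for i
  proof -
    have "i \<in> {2..n}" using that I2 by blast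
    then have h: "1 \<le> i - 1" "i - 1 \<le> i" "i \<le> n" by auto
    have "x i \<le> x (i - 1)" using ordx_le[OF ox h] .
    then show ?thesis unfolding gt_def by (auto simp: min_def)
  qed
  define D where "D a = GG n' m (stp n x a) - GG n' m x" for a
  have Dlow: "(\<Sum>i\<in>I. ind n x (fst (fst a)) i * snd (fst a) * gt x i) \<le> D a" if "good a" for a
    using D1[OF ox n2 that I2 fI] by (simp add: D_def GGI)
  have Dnn: "0 \<le> D a" if "good a" for a
  proof -
    have "0 \<le> (\<Sum>i\<in>I. ind n x (fst (fst a)) i * snd (fst a) * gt x i)"
      using that gt_nn by (intro sum_nonneg) (auto simp: ind_def good_def)
    then show ?thesis using Dlow[OF that] by simp
  qed
  have AEg: "AE a in IM \<theta>. good a" by (rule IM_AE_good[OF th])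
  have mS: "(\<lambda>a. GG n' m (stp n x a)) \<in> borel_measurable (IM \<theta>)"
    by (rule meas_GG[OF stp_x_meas[OF th]])
  have mF[measurable]: "(\<lambda>a. ennreal (K * (real m - GG n' m (stp n x a)))) \<in> borel_measurable (IM \<theta>)"
    using mS by measurable
  have mD[measurable]: "(\<lambda>a. ennreal (K * D a)) \<in> borel_measurable (IM \<theta>)"
    using mS unfolding D_def by measurable
  have mC[measurable]: "cost n x \<in> borel_measurable (IM \<theta>)"
    using measurable_compose[OF measurable_Pair[OF measurable_const[of x] measurable_ident] meas_cost[OF th, of n]]
    by simp
  have Int1: "(\<integral>\<^sup>+a. ennreal (K * (real m - GG n' m (stp n x a))) \<partial>IM \<theta>) + (\<integral>\<^sup>+a. ennreal (K * D a) \<partial>IM \<theta>)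
      = ennreal (K * (real m - GG n' m x))"
  proof -
    have "(\<integral>\<^sup>+a. ennreal (K * (real m - GG n' m (stp n x a))) \<partial>IM \<theta>) + (\<integral>\<^sup>+a. ennreal (K * D a) \<partial>IM \<theta>)
      = (\<integral>\<^sup>+a. ennreal (K * (real m - GG n' m (stp n x a))) + ennreal (K * D a) \<partial>IM \<theta>)"
      by (rule nn_integral_add[symmetric]) simp_all
    also have "\<dots> = (\<integral>\<^sup>+a. ennreal (K * (real m - GG n' m x)) \<partial>IM \<theta>)"
    proof (rule nn_integral_cong_AE)
      show "AE a in IM \<theta>. ennreal (K * (real m - GG n' m (stp n x a))) + ennreal (K * D a) = ennreal (K * (real m - GG n' m x))"
        using AEg
      proof (rule AE_mp, intro AE_I2 impI)
        fix a assume g: "good a"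
        have "0 \<le> K * (real m - GG n' m (stp n x a))" using GGle[of "stp n x a"] by (simp add: K_def)
        moreover have "0 \<le> K * D a" using Dnn[OF g] by (simp add: K_def)
        ultimately have "ennreal (K * (real m - GG n' m (stp n x a))) + ennreal (K * D a)
           = ennreal (K * (real m - GG n' m (stp n x a)) + K * D a)" by (rule ennreal_plus[symmetric])
        also have "\<dots> = ennreal (K * (real m - GG n' m x))" by (simp add: D_def algebra_simps)
        finally show "ennreal (K * (real m - GG n' m (stp n x a))) + ennreal (K * D a) = ennreal (K * (real m - GG n' m x))" .
      qed
    qed
    also have "\<dots> = ennreal (K * (real m - GG n' m x))" by (simp add: IMp.emeasure_space_1)
    finally show ?thesis .
  qed
  have Int2: "ennreal (3 / R) \<le> (\<integral>\<^sup>+a. ennreal (K * D a) \<partial>IM \<theta>)"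
  proof -
    have K0: "0 \<le> K" by (simp add: K_def)
    have e2: "2 \<le> exp (1::real)" using exp_ge_add_one_self_aux[of 1] by simp
    have sumgt: "3 / 4 \<le> (\<Sum>i\<in>I. gt x i)"
    proof -
      have "(\<Sum>i\<in>I. gt x i) = (\<Sum>i\<in>{Suc a0..n'}. min (x (i - 1)) 1 - min (x i) 1)"
        by (simp add: I_def gt_def)
      also have "\<dots> = min (x a0) 1 - min (x n') 1"
        using a0 by (intro tele2[of a0 n' "\<lambda>i. min (x i) 1"]) simp
      also have "min (x a0) 1 = 1" using xa by (simp add: a0_def)
      finally have "(\<Sum>i\<in>I. gt x i) = 1 - min (x n') 1" .
      moreover have "1 / (2 * exp 1) \<le> (1 / 4 :: real)" using e2 by (simp add: field_simps)
      ultimately show ?thesis using xn by linarith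
    qed
    have rb: "3 / R \<le> (\<Sum>i\<in>I. K * gt x i * (x (i - 1) - x i) / (4 * R))"
    proof -
      have R0: "0 < R" using R1 by linarith
      show ?thesis by (rule real_bound[OF fI cI m3 gt_nn sumgt K_def R0])
    qed
    have mu[measurable]: "(\<lambda>a. fst (fst a)) \<in> borel_measurable (IM \<theta>)" "(\<lambda>a. snd (fst a)) \<in> borel_measurable (IM \<theta>)"
      by (simp_all add: measurable_cong_sets[OF IM_sets[OF th] refl] IB_def)
    have mi: "(\<lambda>u. ennreal (ind n x u i)) \<in> borel_measurable borel" for i
      unfolding ind_def by measurable
    have mi2[measurable]: "(\<lambda>a. ennreal (ind n x (fst (fst a)) i)) \<in> borel_measurable (IM \<theta>)" for i
      using measurable_compose[OF mu(1) mi] by simp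
    have pw: "(\<Sum>i\<in>I. ennreal (K * gt x i) * (ennreal (ind n x (fst (fst a)) i) * ennreal (snd (fst a))))
        \<le> ennreal (K * D a)" if g: "good a" for a
    proof -
      have v0: "0 \<le> snd (fst a)" using g by (simp add: good_def)
      have i0: "0 \<le> ind n x u i" for u i by (simp add: ind_def)
      have t: "ennreal (K * gt x i) * (ennreal (ind n x (fst (fst a)) i) * ennreal (snd (fst a)))
          = ennreal (K * (ind n x (fst (fst a)) i * snd (fst a) * gt x i))" if "i \<in> I" for i
      proof -
        have "0 \<le> K * gt x i" using gt_nn[OF that] K0 by simp
        moreover have "0 \<le> ind n x (fst (fst a)) i" by (rule i0)
        ultimately show ?thesis using v0
          by (simp add: ennreal_mult[symmetric] mult_ac)
      qed
      have "(\<Sum>i\<in>I. ennreal (K * gt x i) * (ennreal (ind n x (fst (fst a)) i) * ennreal (snd (fst a))))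
          = (\<Sum>i\<in>I. ennreal (K * (ind n x (fst (fst a)) i * snd (fst a) * gt x i)))"
        using t by (rule sum.cong[OF refl])
      also have "\<dots> = ennreal (\<Sum>i\<in>I. K * (ind n x (fst (fst a)) i * snd (fst a) * gt x i))"
        using gt_nn K0 v0 i0 by (intro sum_ennreal) (simp add: mult_nonneg_nonneg)
      also have "\<dots> \<le> ennreal (K * D a)"
        using Dlow[OF g] K0 by (intro ennreal_leI) (simp add: sum_distrib_left[symmetric] mult_left_mono)
      finally show ?thesis .
    qed
    have UUi: "(\<integral>\<^sup>+u. ennreal (ind n x u i) \<partial>UU) = ennreal ((x (i - 1) - x i) / R)" if "i \<in> I" for i
    proof -
      have i2: "i \<in> {2..n}" using that I2 by blast
      have h: "1 \<le> i - 1" "i - 1 \<le> i" "i \<le> n" "1 \<le> i" using i2 by auto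
      have c1: "1 \<le> sftl_cum n x (i - 1)" using ordx_le[OF ox, of 1 "i - 1"] h cum_eq[OF h(1), of n x] by simp
      have c2: "sftl_cum n x (i - 1) \<le> sftl_cum n x i" by (rule cum_mono[OF ox h(1) h(2) h(3)])
      have c3: "sftl_cum n x i \<le> R"
      proof -
        have "sftl_cum n x i \<le> sftl_cum n x n" using cum_mono[OF ox h(4) h(3)] by simp
        also have "sftl_cum n x n = R" by (simp add: R_def sftl_cum_def sftl_rate_def)
        finally show ?thesis .
      qed
      have "(\<integral>\<^sup>+u. ennreal (ind n x u i) \<partial>UU) = ennreal ((sftl_cum n x i - sftl_cum n x (i - 1)) / R)"
        unfolding ind_def R_def[symmetric] using c1 c2 c3 R1 by (intro UU_ind) auto
      also have "sftl_cum n x i - sftl_cum n x (i - 1) = x (i - 1) - x i"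
        using cum_eq[OF h(1), of n x] cum_eq[OF h(4), of n x] by simp
      finally show ?thesis .
    qed
    have "ennreal (3 / R) \<le> ennreal (\<Sum>i\<in>I. K * gt x i * (x (i - 1) - x i) / (4 * R))"
      using rb by (rule ennreal_leI)
    also have "\<dots> = (\<Sum>i\<in>I. ennreal (K * gt x i) * (ennreal ((x (i - 1) - x i) / R) * ennreal (1 / 4)))"
    proof -
      have "ennreal (K * gt x i * (x (i - 1) - x i) / (4 * R)) = ennreal (K * gt x i) * (ennreal ((x (i - 1) - x i) / R) * ennreal (1 / 4))"
        if "i \<in> I" for i
      proof -
        have "0 \<le> K * gt x i" "0 \<le> (x (i - 1) - x i) / R" using gt_nn[OF that] K0 R1 by auto
        then show ?thesis by (simp add: ennreal_mult[symmetric] field_simps)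
      qed
      moreover have "0 \<le> K * gt x i * (x (i - 1) - x i) / (4 * R)" if "i \<in> I" for i
        using gt_nn[OF that] K0 R1 by auto
      ultimately show ?thesis by (simp add: sum_ennreal[symmetric])
    qed
    also have "\<dots> \<le> (\<Sum>i\<in>I. ennreal (K * gt x i) * ((\<integral>\<^sup>+u. ennreal (ind n x u i) \<partial>UU) * (\<integral>\<^sup>+v. ennreal v \<partial>UU)))"
      using UUi UU_v by (intro sum_mono mult_left_mono) (auto intro: mult_left_mono)
    also have "\<dots> = (\<Sum>i\<in>I. ennreal (K * gt x i) * (\<integral>\<^sup>+a. ennreal (ind n x (fst (fst a)) i) * ennreal (snd (fst a)) \<partial>IM \<theta>))"
      using IM_uv[OF th mi] by simp
    also have "\<dots> = (\<Sum>i\<in>I. \<integral>\<^sup>+a. ennreal (K * gt x i) * (ennreal (ind n x (fst (fst a)) i) * ennreal (snd (fst a))) \<partial>IM \<theta>)"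
      by (intro sum.cong refl nn_integral_cmult[symmetric]) measurable
    also have "\<dots> = (\<integral>\<^sup>+a. (\<Sum>i\<in>I. ennreal (K * gt x i) * (ennreal (ind n x (fst (fst a)) i) * ennreal (snd (fst a)))) \<partial>IM \<theta>)"
      by (rule nn_integral_sum[symmetric]) measurable
    also have "\<dots> \<le> (\<integral>\<^sup>+a. ennreal (K * D a) \<partial>IM \<theta>)"
      apply (intro nn_integral_mono_AE) apply (rule AE_mp[OF AEg]) apply (rule AE_I2)
      apply (rule impI) apply (erule pw) done
    finally show ?thesis .
  qed
  have Cst: "(\<integral>\<^sup>+a. cost n x a \<partial>IM \<theta>) \<le> ennreal (3 / R)"
    using cost_int[OF th ox] n2 by (simp add: R_def)
  have "(\<integral>\<^sup>+a. cost n x a + ennreal (K * (real m - GG n' m (stp n x a))) \<partial>IM \<theta>)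
     = (\<integral>\<^sup>+a. cost n x a \<partial>IM \<theta>) + (\<integral>\<^sup>+a. ennreal (K * (real m - GG n' m (stp n x a))) \<partial>IM \<theta>)"
    by (rule nn_integral_add) simp_all
  also have "\<dots> \<le> (\<integral>\<^sup>+a. ennreal (K * D a) \<partial>IM \<theta>) + (\<integral>\<^sup>+a. ennreal (K * (real m - GG n' m (stp n x a))) \<partial>IM \<theta>)"
    using Cst Int2 by (intro add_right_mono) simp
  also have "\<dots> = ennreal (K * (real m - GG n' m x))" using Int1 by (simp add: add.commute)
  finally show ?thesis by (simp add: K_def)
qed

end

definition stopP :: "nat \<Rightarrow> (nat \<Rightarrow> real) \<Rightarrow> bool" where
  "stopP n' x = (0 < x (Suc n') \<or> 1 / (2 * exp 1) \<le> x n')"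

definition RR :: "nat \<Rightarrow> nat \<Rightarrow> nat \<Rightarrow> (nat \<Rightarrow> real) set" where
  "RR n n' m = {x. ordx n x \<and> 1 \<le> x (n' + 2 - m) \<and> 0 \<le> x (Suc n')}"

lemma chain_Suc': "sftl_chain n s \<omega> (Suc k) = stp n (sftl_chain n s \<omega> k) (\<omega> k)"
  by (simp add: stp_def)

lemma chain_ord:
  assumes "ordx n s" "2 \<le> n" "\<forall>k. good (\<omega> k)"
  shows "ordx n (sftl_chain n s \<omega> k)"
proof (induction k)
  case 0 then show ?case using assms by simp
next
  case (Suc k) then show ?case
    using stp_mono[OF Suc assms(2), of "\<omega> k"] assms(3) by (simp add: chain_Suc' del: sftl_chain.simps(2))
qed

lemma chain_mono:
  assumes "ordx n s" "2 \<le> n" "\<forall>k. good (\<omega> k)" "k \<le> k'"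
  shows "sftl_chain n s \<omega> k j \<le> sftl_chain n s \<omega> k' j"
proof -
  have "sftl_chain n s \<omega> i j \<le> sftl_chain n s \<omega> (Suc i) j" for i
    using stp_mono[OF chain_ord[OF assms(1-3)] assms(2), of "\<omega> i" i] assms(3) by (simp add: chain_Suc' del: sftl_chain.simps(2))
  then show ?thesis using assms(4) by (rule lift_Suc_mono_le)
qed

lemma stop_mono:
  assumes "ordx n s" "2 \<le> n" "\<forall>k. good (\<omega> k)" "k \<le> k'" "stopP n' (sftl_chain n s \<omega> k)"
  shows "stopP n' (sftl_chain n s \<omega> k')"
  using assms(5) chain_mono[OF assms(1-4), of "Suc n'"] chain_mono[OF assms(1-4), of n']
  unfolding stopP_def by linarith

lemma eventually_stop:
  assumes ox: "ordx n s" and n2: "2 \<le> n" and g: "\<forall>k. good (\<omega> k)"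
    and fin: "(\<Sum>k. TT n (stopP n') (cost n) s \<omega> k) \<noteq> \<top>"
  shows "\<exists>K. stopP n' (sftl_chain n s \<omega> K)"
proof (rule ccontr)
  assume "\<not> (\<exists>K. stopP n' (sftl_chain n s \<omega> K))"
  then have ns: "\<And>k. \<not> stopP n' (sftl_chain n s \<omega> k)" by blast
  define R where "R k = sftl_rate n (sftl_chain n s \<omega> k)" for k
  define f where "f k = max 0 (fst (snd (\<omega> k))) / R k + 1 / R k + (if fst (fst (\<omega> k)) * R k < 1 then 1 else 0)" for k
  have R1: "1 \<le> R k" for k unfolding R_def using rate_ge1[OF chain_ord[OF ox n2 g]] n2 by simp
  have TTf: "TT n (stopP n') (cost n) s \<omega> k = ennreal (f k)" for k
    using ns by (simp add: TT_def cost_def f_def R_def)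
  have fnn: "0 \<le> f k" for k using R1[of k] by (simp add: f_def)
  have sf: "summable f" using fin fnn by (intro summable_suminf_not_top) (simp_all add: TTf)
  have lim: "f \<longlonglongrightarrow> 0" by (rule summable_LIMSEQ_zero[OF sf])
  have "eventually (\<lambda>k. f k < 1) sequentially" using order_tendstoD(2)[OF lim, of 1] by simp
  then obtain k0 where k0: "\<And>k. k0 \<le> k \<Longrightarrow> f k < 1" by (auto simp: eventually_sequentially)
  have lead: "1 \<le> fst (fst (\<omega> k)) * R k" if "k0 \<le> k" for k
  proof (rule ccontr)
    assume "\<not> 1 \<le> fst (fst (\<omega> k)) * R k"
    then have "1 \<le> f k" using R1[of k] by (simp add: f_def)
    with k0[OF that] show False by simp
  qed
  have Rdec: "R (Suc k) \<le> R k" if "k0 \<le> k" for k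
    using stp_nonleader[OF chain_ord[OF ox n2 g] n2, of "\<omega> k" k] g lead[OF that]
    by (simp add: R_def chain_Suc' del: sftl_chain.simps(2))
  have Rb: "R k \<le> R k0" if "k0 \<le> k" for k
    using that
  proof (induction k rule: dec_induct)
    case base then show ?case by simp
  next
    case (step k) then show ?case using Rdec[OF step(1)] by simp
  qed
  have pos: "0 < 1 / R k0" using R1[of k0] by simp
  have "eventually (\<lambda>k. f k < 1 / R k0) sequentially" using order_tendstoD(2)[OF lim pos] .
  then obtain k1 where k1: "\<And>k. k1 \<le> k \<Longrightarrow> f k < 1 / R k0" by (auto simp: eventually_sequentially)
  define k where "k = max k0 k1"
  have "1 / R k0 \<le> 1 / R k" using Rb[of k] R1[of k] by (simp add: k_def frac_le)
  also have "1 / R k \<le> f k" using R1[of k] by (simp add: f_def)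
  finally show False using k1[of k] by (simp add: k_def)
qed

lemma xi_bound:
  assumes ox: "ordx n s" and n2: "2 \<le> n" and g: "\<forall>k. good (\<omega> k)"
    and fin: "(\<Sum>k. TT n (stopP n') (cost n) s \<omega> k) \<noteq> \<top>"
  shows "sftl_xi n n' s \<omega> \<le> (\<Sum>k. TT n (stopP n') (cost n) s \<omega> k)"
proof -
  obtain K0 where "stopP n' (sftl_chain n s \<omega> K0)" using eventually_stop[OF assms] by blast
  define K where "K = (LEAST K. stopP n' (sftl_chain n s \<omega> K))"
  have sK: "stopP n' (sftl_chain n s \<omega> K)" unfolding K_def by (rule LeastI) fact
  have nsK: "\<not> stopP n' (sftl_chain n s \<omega> k)" if "k < K" for k
    using not_less_Least[OF that[unfolded K_def]] by (simp add: K_def)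
  define R where "R k = sftl_rate n (sftl_chain n s \<omega> k)" for k
  have R1: "1 \<le> R k" for k unfolding R_def using rate_ge1[OF chain_ord[OF ox n2 g]] n2 by simp
  have hold_pos: "0 < sftl_hold n s \<omega> k" for k
    using g R1[of k] by (simp add: sftl_hold_def R_def good_def)
  have jt_Suc: "sftl_jt n s \<omega> (Suc k) = sftl_jt n s \<omega> k + sftl_hold n s \<omega> k" for k
    by (simp add: sftl_jt_def)
  have jt_mono: "sftl_jt n s \<omega> k \<le> sftl_jt n s \<omega> k'" if "k \<le> k'" for k k'
    unfolding sftl_jt_def using that hold_pos by (intro sum_mono2) (auto intro: less_imp_le)
  have jt0: "0 \<le> sftl_jt n s \<omega> k" for k
    unfolding sftl_jt_def using hold_pos by (intro sum_nonneg) (auto intro: less_imp_le)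
  define t where "t = sftl_jt n s \<omega> K"
  have PK: "sftl_jt n s \<omega> K \<le> t \<and> t < sftl_jt n s \<omega> (Suc K)"
    using hold_pos[of K] by (simp add: t_def jt_Suc)
  have LK: "(LEAST k. sftl_jt n s \<omega> k \<le> t \<and> t < sftl_jt n s \<omega> (Suc k)) = K"
  proof (rule Least_equality)
    show "sftl_jt n s \<omega> K \<le> t \<and> t < sftl_jt n s \<omega> (Suc K)" by (rule PK)
  next
    fix y assume y: "sftl_jt n s \<omega> y \<le> t \<and> t < sftl_jt n s \<omega> (Suc y)"
    show "K \<le> y"
    proof (rule ccontr)
      assume "\<not> K \<le> y"
      then have "Suc y \<le> K" by simp
      from jt_mono[OF this] y show False by (simp add: t_def)
    qed
  qed
  have X: "sftl_X n s \<omega> t = Some (sftl_chain n s \<omega> K)"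
    unfolding sftl_X_def using PK LK by auto
  have t0: "0 \<le> t" by (simp add: t_def jt0)
  have xi: "sftl_xi n n' s \<omega> \<le> ennreal t"
  proof -
    consider "0 < sftl_chain n s \<omega> K (Suc n')" | "1 / (2 * exp 1) \<le> sftl_chain n s \<omega> K n'"
      using sK by (auto simp: stopP_def)
    then show ?thesis
    proof cases
      case 1
      have "t \<in> {t. 0 \<le> t \<and> (\<exists>x. sftl_X n s \<omega> t = Some x \<and> 0 < x (n' + 1))}"
        using X t0 1 by simp
      then have "(INF t \<in> {t. 0 \<le> t \<and> (\<exists>x. sftl_X n s \<omega> t = Some x \<and> 0 < x (n' + 1))}. ennreal t) \<le> ennreal t"
        by (rule INF_lower)
      then show ?thesis unfolding sftl_xi_def by (rule min.coboundedI1)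
    next
      case 2
      have "t \<in> {t. 0 \<le> t \<and> (\<exists>x. sftl_X n s \<omega> t = Some x \<and> 1 / (2 * exp 1) \<le> x n')}"
        using X t0 2 by simp
      then have "(INF t \<in> {t. 0 \<le> t \<and> (\<exists>x. sftl_X n s \<omega> t = Some x \<and> 1 / (2 * exp 1) \<le> x n')}. ennreal t) \<le> ennreal t"
        by (rule INF_lower)
      then show ?thesis unfolding sftl_xi_def by (rule min.coboundedI2)
    qed
  qed
  have "ennreal t = (\<Sum>k<K. ennreal (sftl_hold n s \<omega> k))"
    unfolding t_def sftl_jt_def using hold_pos by (subst sum_ennreal) (auto intro: less_imp_le)
  also have "\<dots> \<le> (\<Sum>k<K. TT n (stopP n') (cost n) s \<omega> k)"
  proof (rule sum_mono)
    fix k assume k: "k \<in> {..<K}"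
    have "\<forall>j\<in>{..k}. \<not> stopP n' (sftl_chain n s \<omega> j)" using k nsK by auto
    then have TTk: "TT n (stopP n') (cost n) s \<omega> k = cost n (sftl_chain n s \<omega> k) (\<omega> k)"
      by (simp add: TT_def)
    have e0: "0 < fst (snd (\<omega> k))" using g by (simp add: good_def)
    show "ennreal (sftl_hold n s \<omega> k) \<le> TT n (stopP n') (cost n) s \<omega> k"
      unfolding TTk cost_def sftl_hold_def R_def[symmetric]
      using e0 R1[of k] by (intro ennreal_leI) auto
  qed
  also have "\<dots> \<le> (\<Sum>k. TT n (stopP n') (cost n) s \<omega> k)"
    by (rule sum_le_suminf[OF summableI]) auto
  finally show ?thesis using xi by simp
qed

lemma main_bound:
  fixes \<theta> :: "real measure"
  assumes th: "prob_space \<theta>" "sets \<theta> = sets borel" "emeasure \<theta> {x. x \<le> 0} = 0"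
    and m3: "3 \<le> m" and mn: "m \<le> n" and n'1: "m - 1 \<le> n'" and n'2: "n' \<le> n - 1"
    and sS: "s \<in> sftl_S n m n'"
  shows "sftl_E \<theta> n s (sftl_xi n n' s) \<le> ennreal (22 * real m ^ 2)"
proof -
  let ?IM = "sftl_input_measure \<theta>"
  let ?\<Omega> = "PiM UNIV (\<lambda>_::nat. ?IM)"
  let ?F = "\<lambda>y. ennreal (22 * real m * (real m - GG n' m y))"
  let ?T = "\<lambda>\<omega> k. TT n (stopP n') (cost n) s \<omega> k"
  have n2: "2 \<le> n" using m3 mn by simp
  have ox: "ordx n s" using sS by (simp add: sftl_S_def ordx_def)
  have s0: "s (Suc n') = 0" "1 \<le> s (n' + 2 - m)" using sS by (auto simp: sftl_S_def)
  have sR: "s \<in> RR n n' m" using ox s0 by (simp add: RR_def)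
  have stop_meas: "Measurable.pred XS (stopP n')"
  proof -
    have [measurable]: "(\<lambda>x. x i) \<in> borel_measurable XS" for i
      by (rule meas_XS_comp[OF measurable_ident_sets[OF refl]])
    show ?thesis unfolding stopP_def by measurable
  qed
  have inv: "AE a in ?IM. stp n x a \<in> RR n n' m" if "x \<in> RR n n' m" "\<not> stopP n' x" for x
    using IM_AE_good[OF th]
  proof (rule AE_mp, intro AE_I2 impI)
    fix a assume g: "good a"
    have ox': "ordx n x" using that by (simp add: RR_def)
    from stp_mono[OF ox' n2 g] that show "stp n x a \<in> RR n n' m"
      by (auto simp: RR_def intro: order_trans)
  qed
  have dr: "(\<integral>\<^sup>+a. cost n x a + ?F (stp n x a) \<partial>?IM) \<le> ?F x"
    if "x \<in> RR n n' m" "\<not> stopP n' x" for x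
  proof -
    have "ordx n x" "1 \<le> x (n' + 2 - m)" "x n' < 1 / (2 * exp 1)" using that by (auto simp: RR_def stopP_def)
    from drift[OF th m3 mn n'1 n'2 this] show ?thesis .
  qed
  have B: "(\<integral>\<^sup>+\<omega>. (\<Sum>k. ?T \<omega> k) \<partial>?\<Omega>) \<le> ?F s"
    by (rule rec_bound_inf[OF probs(5)[OF th] IM_sets[OF th] stop_meas meas_cost[OF th] inv dr sR])
  have GG0: "0 \<le> GG n' m s"
  proof -
    have "0 \<le> s i" if "i \<in> {Suc (n' + 2 - m)..n'}" for i
    proof -
      have "1 \<le> i" "i \<le> Suc n'" "Suc n' \<le> n" using that m3 n'1 n'2 n2 by auto
      from ordx_le[OF ox this] s0 show ?thesis by simp
    qed
    then show ?thesis unfolding GG_def by (intro sum_nonneg) auto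
  qed
  have Fs: "?F s \<le> ennreal (22 * real m ^ 2)"
    using GG0 by (intro ennreal_leI) (simp add: power2_eq_square algebra_simps)
  have AEg: "AE \<omega> in ?\<Omega>. \<forall>k. good (\<omega> k)"
    unfolding AE_all_countable
    by (intro allI AE_PiM_component[of UNIV "\<lambda>_. ?IM"] IM_AE_good[OF th] probs(5)[OF th]) auto
  have mk: "(\<lambda>\<omega>. ?T \<omega> k) \<in> borel_measurable ?\<Omega>" for k
    using measurable_compose[OF measurable_Pair[OF measurable_const[of s] measurable_ident]
        meas_TT[OF IM_sets[OF th] stop_meas meas_cost[OF th, of n], of n k]] by simp
  have mT: "(\<lambda>\<omega>. \<Sum>k. ?T \<omega> k) \<in> borel_measurable ?\<Omega>"
    using mk by (rule borel_measurable_suminf_order)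
  have AEf: "AE \<omega> in ?\<Omega>. (\<Sum>k. ?T \<omega> k) \<noteq> \<infinity>"
    by (rule nn_integral_noteq_infinite[OF mT]) (use B in \<open>auto simp: top_unique\<close>)
  have "sftl_E \<theta> n s (sftl_xi n n' s) = (\<integral>\<^sup>+\<omega>. sftl_xi n n' s \<omega> \<partial>?\<Omega>)"
    by (simp add: sftl_E_def sftl_space_def)
  also have "\<dots> \<le> (\<integral>\<^sup>+\<omega>. (\<Sum>k. ?T \<omega> k) \<partial>?\<Omega>)"
  proof (rule nn_integral_mono_AE)
    show "AE \<omega> in ?\<Omega>. sftl_xi n n' s \<omega> \<le> (\<Sum>k. ?T \<omega> k)"
      using AEg AEf by eventually_elim (rule xi_bound[OF ox n2], auto)
  qed
  also have "\<dots> \<le> ?F s" by (rule B)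
  also have "\<dots> \<le> ennreal (22 * real m ^ 2)" by (rule Fs)
  finally show ?thesis .
qed

theorem corollary6p3:
  fixes \<theta> :: "real measure"
  assumes "prob_space \<theta>" and "sets \<theta> = sets borel" and "emeasure \<theta> {x. x \<le> 0} = 0"
  shows "\<exists>c>0. \<forall>n m. 3 \<le> n \<longrightarrow> 3 \<le> m \<longrightarrow> m \<le> n \<longrightarrow>
     (SUP n'\<in>{m - 1..n - 1}. SUP s\<in>sftl_S n m n'. sftl_E \<theta> n s (sftl_xi n n' s))
       \<le> ennreal (c * real m ^ 2)"
proof (intro exI[of _ 22] conjI allI impI)
  fix n m :: nat assume "3 \<le> n" "3 \<le> m" "m \<le> n"
  then show "(SUP n'\<in>{m - 1..n - 1}. SUP s\<in>sftl_S n m n'. sftl_E \<theta> n s (sftl_xi n n' s))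
       \<le> ennreal (22 * real m ^ 2)"
    by (intro SUP_least main_bound[OF assms]) auto
qed simp

end
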